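(* Let $G$ be the digraph with vertex set $\{v_1,\dots,v_7\}$ and arc set $\{(v_1,v_4),(v_1,v_2),(v_2,v_4),(v_2,v_3),(v_3,v_4),(v_4,v_6),(v_4,v_5),(v_5,v_6),(v_6,v_7),(v_4,v_7)\}$. Then $G$ is an esp-digraph and $\chi_o(G)=7$. In particular, the bound $\chi_o(G)\le 7$ for esp-digraphs is best possible.
   Context: An oriented graph is a digraph without loops and without pairs of opposite arcs. For a digraph $G=(V,E)$ (parallel arcs allowed; the definitions apply verbatim), an oriented $r$-vertex-coloring is a map $c:V\to\{1,\dots,r\}$ such that (i) $c(u)\ne c(v)$ for every arc $(u,v)\in E$, and (ii) $c(u)\ne c(y)$ for every two arcs $(u,v),(x,y)\in E$ with $c(v)=c(x)$. Equivalently, $c$ is a homomorphism to an oriented graph on $r$ vertices. The oriented chromatic number $\chi_o(G)$ is the smallest $r$ for which such a coloring exists. Edge series-parallel (multi)digraphs (esp-digraphs) are defined recursively, each with a distinguished source and sink: (i) a digraph with two distinct vertices $u,v$ and the single arc $(u,v)$ is an esp-digraph with source $u$ and sink $v$; (ii) if $G_1,G_2$ are vertex-disjoint esp-digraphs, then the parallel composition $G_1\cup G_2$ (identify the source of $G_1$ with the source of $G_2$ and the sink of $G_1$ with the sink of $G_2$; arcs are united, possibly creating parallel arcs) is an esp-digraph with these identified source and sink, and the series composition $G_1\times G_2$ (identify the sink of $G_1$ with the source of $G_2$) is an esp-digraph with source the source of $G_1$ and sink the sink of $G_2$. *)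

theory Defs
  imports Main "HOL-Library.Multiset"
begin

definition oriented_coloring :: "'a set \<Rightarrow> ('a \<times> 'a) multiset \<Rightarrow> nat \<Rightarrow> ('a \<Rightarrow> nat) \<Rightarrow> bool" where
  "oriented_coloring V E r c \<longleftrightarrow>
     (\<forall>v\<in>V. c v \<in> {1..r}) \<and>
     (\<forall>(u,v)\<in>set_mset E. c u \<noteq> c v) \<and>
     (\<forall>(u,v)\<in>set_mset E. \<forall>(x,y)\<in>set_mset E. c v = c x \<longrightarrow> c u \<noteq> c y)"

definition oriented_chromatic_number :: "'a set \<Rightarrow> ('a \<times> 'a) multiset \<Rightarrow> nat" where
  "oriented_chromatic_number V E = (LEAST r. \<exists>c. oriented_coloring V E r c)"

text \<open>Edge series-parallel digraphs with source s and sink t. Vertex-disjointness of the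
  components up to the identified vertices is expressed by the intersection conditions.\<close>
inductive esp :: "'a set \<Rightarrow> ('a \<times> 'a) multiset \<Rightarrow> 'a \<Rightarrow> 'a \<Rightarrow> bool" where
  single: "u \<noteq> v \<Longrightarrow> esp {u, v} {#(u, v)#} u v"
| parallel: "esp V1 E1 s t \<Longrightarrow> esp V2 E2 s t \<Longrightarrow> V1 \<inter> V2 = {s, t}
     \<Longrightarrow> esp (V1 \<union> V2) (E1 + E2) s t"
| series: "esp V1 E1 s m \<Longrightarrow> esp V2 E2 m t \<Longrightarrow> V1 \<inter> V2 = {m}
     \<Longrightarrow> esp (V1 \<union> V2) (E1 + E2) s t"

definition esp_digraph :: "'a set \<Rightarrow> ('a \<times> 'a) multiset \<Rightarrow> bool" where
  "esp_digraph V E \<longleftrightarrow> (\<exists>s t. esp V E s t)"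

text \<open>The example digraph, vertex v_i represented by the natural number i.\<close>
definition exV :: "nat set" where "exV = {1..7}"

definition exE :: "(nat \<times> nat) multiset" where
  "exE = {#(1,4),(1,2),(2,4),(2,3),(3,4),(4,6),(4,5),(5,6),(6,7),(4,7)#}"

end

theory Submission
  imports Defs
begin

lemma esp_cong: "esp V E s t \<Longrightarrow> V = V' \<Longrightarrow> E = E' \<Longrightarrow> esp V' E' s t" by simp

lemma esp_ex: "esp exV exE (1::nat) 7"
proof -
  have a: "esp {2,3,4} {#(2,3),(3,4)#} (2::nat) 4"
    by (rule esp_cong[OF esp.series[OF esp.single[of "2::nat" 3] esp.single[of "3::nat" 4]]]) (auto simp: add_mset_commute)
  have b: "esp {2,3,4} {#(2,4),(2,3),(3,4)#} (2::nat) 4"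
    by (rule esp_cong[OF esp.parallel[OF esp.single[of "2::nat" 4] a]]) (auto simp: add_mset_commute)
  have c: "esp {1,2,3,4} {#(1,2),(2,4),(2,3),(3,4)#} (1::nat) 4"
    by (rule esp_cong[OF esp.series[OF esp.single[of "1::nat" 2] b]]) (auto simp: add_mset_commute)
  have d: "esp {1,2,3,4} {#(1,4),(1,2),(2,4),(2,3),(3,4)#} (1::nat) 4"
    by (rule esp_cong[OF esp.parallel[OF esp.single[of "1::nat" 4] c]]) (auto simp: add_mset_commute)
  have e: "esp {4,5,6} {#(4,5),(5,6)#} (4::nat) 6"
    by (rule esp_cong[OF esp.series[OF esp.single[of "4::nat" 5] esp.single[of "5::nat" 6]]]) (auto simp: add_mset_commute)
  have f: "esp {4,5,6} {#(4,6),(4,5),(5,6)#} (4::nat) 6"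
    by (rule esp_cong[OF esp.parallel[OF esp.single[of "4::nat" 6] e]]) (auto simp: add_mset_commute)
  have g: "esp {4,5,6,7} {#(4,6),(4,5),(5,6),(6,7)#} (4::nat) 7"
    by (rule esp_cong[OF esp.series[OF f esp.single[of "6::nat" 7]]]) (auto simp: add_mset_commute)
  have h: "esp {4,5,6,7} {#(4,7),(4,6),(4,5),(5,6),(6,7)#} (4::nat) 7"
    by (rule esp_cong[OF esp.parallel[OF esp.single[of "4::nat" 7] g]]) (auto simp: add_mset_commute)
  have i: "esp ({1,2,3,4} \<union> {4,5,6,7}) ({#(1,4),(1,2),(2,4),(2,3),(3,4)#} + {#(4,7),(4,6),(4,5),(5,6),(6,7)#}) (1::nat) 7"
    by (rule esp.series[OF d h]) auto
  have "{1,2,3,4} \<union> {4,5,6,7} = exV" unfolding exV_def by auto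
  moreover have "{#(1,4),(1,2),(2,4),(2,3),(3,4)#} + {#(4,7),(4,6),(4,5),(5,6),(6,7)#} = exE"
    unfolding exE_def by (simp add: add_mset_commute)
  ultimately show ?thesis using i by simp
qed

lemma col7: "oriented_coloring exV exE 7 id"
  unfolding oriented_coloring_def exV_def exE_def by auto

lemma lower: assumes "oriented_coloring exV exE r c" shows "7 \<le> r"
proof -
  from assms have r: "\<forall>v\<in>exV. c v \<in> {1..r}"
    and a: "\<forall>(u,v)\<in>set_mset exE. c u \<noteq> c v"
    and b: "\<forall>(u,v)\<in>set_mset exE. \<forall>(x,y)\<in>set_mset exE. c v = c x \<longrightarrow> c u \<noteq> c y"
    unfolding oriented_coloring_def by blast+
  have s: "set_mset exE = {(1,4),(1,2),(2,4),(2,3),(3,4),(4,6),(4,5),(5,6),(6,7),(4,7)}"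
    unfolding exE_def by auto
  have d1: "c 1 \<noteq> c 4" "c 2 \<noteq> c 4" "c 3 \<noteq> c 4" "c 4 \<noteq> c 5" "c 4 \<noteq> c 6" "c 4 \<noteq> c 7"
       "c 1 \<noteq> c 2" "c 2 \<noteq> c 3" "c 5 \<noteq> c 6" "c 6 \<noteq> c 7"
    using a unfolding s by auto
  have bb: "\<And>u v x y. (u,v) \<in> set_mset exE \<Longrightarrow> (x,y) \<in> set_mset exE \<Longrightarrow> c v = c x \<Longrightarrow> c u \<noteq> c y"
  proof -
    fix u v x y assume 1: "(u,v) \<in> set_mset exE" and 2: "(x,y) \<in> set_mset exE" and 3: "c v = c x"
    have "\<forall>(x,y)\<in>set_mset exE. c v = c x \<longrightarrow> c u \<noteq> c y" using bspec[OF b 1] by simp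
    from bspec[OF this 2] 3 show "c u \<noteq> c y" by simp
  qed
  have io: "\<And>i w. (i,4) \<in> set_mset exE \<Longrightarrow> (4,w) \<in> set_mset exE \<Longrightarrow> c i \<noteq> c w"
    using bb by blast
  have "c 1 \<noteq> c 3" using bb[of 1 2 2 3] unfolding s by simp
  moreover have "c 5 \<noteq> c 7" using bb[of 5 6 6 7] unfolding s by simp
  moreover have "c 1 \<noteq> c 5" "c 1 \<noteq> c 6" "c 1 \<noteq> c 7"
    "c 2 \<noteq> c 5" "c 2 \<noteq> c 6" "c 2 \<noteq> c 7"
    "c 3 \<noteq> c 5" "c 3 \<noteq> c 6" "c 3 \<noteq> c 7"
    using io unfolding s by simp_all
  moreover note d1
  ultimately have dl: "distinct [c 1, c 2, c 3, c 4, c 5, c 6, c 7]" by simp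
  have cl: "card (set [c 1, c 2, c 3, c 4, c 5, c 6, c 7]) = 7"
    using distinct_card[OF dl] by (simp only: list.size)
  have "set [c 1, c 2, c 3, c 4, c 5, c 6, c 7] \<subseteq> {1..r}"
  proof -
    have "\<And>i. i \<in> {1..7} \<Longrightarrow> c i \<in> {1..r}" using r unfolding exV_def by blast
    then have "c 1 \<in> {1..r}" "c 2 \<in> {1..r}" "c 3 \<in> {1..r}" "c 4 \<in> {1..r}" "c 5 \<in> {1..r}" "c 6 \<in> {1..r}" "c 7 \<in> {1..r}"
      by simp_all
    then show ?thesis by simp
  qed
  then have "card (set [c 1, c 2, c 3, c 4, c 5, c 6, c 7]) \<le> card {1..r}"
    by (rule card_mono[rotated]) simp
  then show ?thesis unfolding cl by simp
qed

theorem mainTheorem2: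
  shows "esp_digraph exV exE \<and> oriented_chromatic_number exV exE = 7"
proof
  show "esp_digraph exV exE" unfolding esp_digraph_def using esp_ex by blast
  show "oriented_chromatic_number exV exE = 7"
    unfolding oriented_chromatic_number_def
    by (rule Least_equality) (use col7 lower in blast)+
qed

end
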